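(* Let $\mathsf{Ch}_3=\langle a,b,c\rangle$. Define $2\times2$ tropical matrices (writing $-$ for $-\infty$): $\rho_1$: $a\mapsto\begin{pmatrix}1&0\\-&0\end{pmatrix}$, $b\mapsto\begin{pmatrix}0&0\\-&1\end{pmatrix}$, $c\mapsto\begin{pmatrix}0&0\\-&1\end{pmatrix}$; $\rho_2$: $a\mapsto\begin{pmatrix}1&0\\-&0\end{pmatrix}$, $b\mapsto\begin{pmatrix}1&0\\-&0\end{pmatrix}$, $c\mapsto\begin{pmatrix}0&0\\-&1\end{pmatrix}$; $\rho_3$: $a\mapsto\begin{pmatrix}1&1\\-&0\end{pmatrix}$, $b\mapsto\begin{pmatrix}0&0\\-&0\end{pmatrix}$, $c\mapsto\begin{pmatrix}0&1\\-&1\end{pmatrix}$. Then the map $\rho=(\rho_1,\rho_2,\rho_3):\mathsf{Ch}_3\to(\mathcal M_2(\mathbb T))^3$, sending a word in $a,b,c$ to the corresponding products of these matrices (and the identity of $\mathsf{Ch}_3$ to the triple $(I_1,I_2,I_3)$ with $I_1=I_2=\begin{pmatrix}0&-1\\-&0\end{pmatrix}$, $I_3=\begin{pmatrix}0&0\\-&0\end{pmatrix}$, each of which acts as a two-sided identity on the semigroup generated by the corresponding generator images), is a well-defined injective semigroup homomorphism.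
   Context: The Chinese monoid $\mathsf{Ch}_3=\langle a,b,c\rangle$ (with $a=a_1,b=a_2,c=a_3$) is presented by the relations $a_ja_ka_i=a_ka_ja_i=a_ka_ia_j$ for all $1\le i\le j\le k\le 3$. $\mathbb T=\mathbb R\cup\{-\infty\}$ is the max-plus semiring (addition $\max$, multiplication ordinary $+$), and $\mathcal M_2(\mathbb T)$ is the monoid of $2\times2$ matrices over $\mathbb T$ with product $(AB)_{ij}=\max_k(A_{ik}+B_{kj})$; $(\mathcal M_2(\mathbb T))^3$ has componentwise product. *)

theory Defs
  imports Main "HOL-Library.Extended_Real"
begin

datatype gen = A | B | C

fun idx :: "gen \<Rightarrow> nat" where
  "idx A = 1" | "idx B = 2" | "idx C = 3"

inductive ch3_step :: "gen list \<Rightarrow> gen list \<Rightarrow> bool" where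
  s1: "idx i \<le> idx j \<Longrightarrow> idx j \<le> idx k \<Longrightarrow>
         ch3_step (u @ [j, k, i] @ v) (u @ [k, j, i] @ v)"
| s2: "idx i \<le> idx j \<Longrightarrow> idx j \<le> idx k \<Longrightarrow>
         ch3_step (u @ [k, j, i] @ v) (u @ [k, i, j] @ v)"

definition ch3_eq :: "gen list \<Rightarrow> gen list \<Rightarrow> bool" where
  "ch3_eq = equivclp ch3_step"

datatype trop = NegInf | Fin real

fun tadd :: "trop \<Rightarrow> trop \<Rightarrow> trop" where
  "tadd NegInf y = y"
| "tadd x NegInf = x"
| "tadd (Fin x) (Fin y) = Fin (max x y)"

fun tmul :: "trop \<Rightarrow> trop \<Rightarrow> trop" where
  "tmul (Fin x) (Fin y) = Fin (x + y)"
| "tmul _ _ = NegInf"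

text \<open>A 2x2 matrix (m11, m12, m21, m22).\<close>
datatype mat2 = M trop trop trop trop

fun mmul :: "mat2 \<Rightarrow> mat2 \<Rightarrow> mat2" where
  "mmul (M a11 a12 a21 a22) (M b11 b12 b21 b22) =
     M (tadd (tmul a11 b11) (tmul a12 b21)) (tadd (tmul a11 b12) (tmul a12 b22))
       (tadd (tmul a21 b11) (tmul a22 b21)) (tadd (tmul a21 b12) (tmul a22 b22))"

type_synonym mat3 = "mat2 \<times> mat2 \<times> mat2"

fun mmul3 :: "mat3 \<Rightarrow> mat3 \<Rightarrow> mat3" where
  "mmul3 (x1, x2, x3) (y1, y2, y3) = (mmul x1 y1, mmul x2 y2, mmul x3 y3)"

fun rho1 :: "gen \<Rightarrow> mat2" where
  "rho1 A = M (Fin 1) (Fin 0) NegInf (Fin 0)"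
| "rho1 B = M (Fin 0) (Fin 0) NegInf (Fin 1)"
| "rho1 C = M (Fin 0) (Fin 0) NegInf (Fin 1)"

fun rho2 :: "gen \<Rightarrow> mat2" where
  "rho2 A = M (Fin 1) (Fin 0) NegInf (Fin 0)"
| "rho2 B = M (Fin 1) (Fin 0) NegInf (Fin 0)"
| "rho2 C = M (Fin 0) (Fin 0) NegInf (Fin 1)"

fun rho3 :: "gen \<Rightarrow> mat2" where
  "rho3 A = M (Fin 1) (Fin 1) NegInf (Fin 0)"
| "rho3 B = M (Fin 0) (Fin 0) NegInf (Fin 0)"
| "rho3 C = M (Fin 0) (Fin 1) NegInf (Fin 1)"

definition rho_gen :: "gen \<Rightarrow> mat3" where
  "rho_gen g = (rho1 g, rho2 g, rho3 g)"

definition I12 :: mat2 where "I12 = M (Fin 0) (Fin (-1)) NegInf (Fin 0)"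
definition I3 :: mat2 where "I3 = M (Fin 0) (Fin 0) NegInf (Fin 0)"

fun rho :: "gen list \<Rightarrow> mat3" where
  "rho [] = (I12, I12, I3)"
| "rho (x # xs) = foldl (\<lambda>m g. mmul3 m (rho_gen g)) (rho_gen x) xs"

end

theory Submission
  imports Defs
begin

definition T :: "real \<Rightarrow> real \<Rightarrow> real \<Rightarrow> mat2" where
  "T p q r = M (Fin p) (Fin q) NegInf (Fin r)"

lemma mmul_T [simp]: "mmul (T p q r) (T p' q' r') = T (p+p') (max (p+q') (q+r')) (r+r')"
  by (simp add: T_def)

lemma T_eq [simp]: "(T p q r = T p' q' r') = (p = p' \<and> q = q' \<and> r = r')"
  by (simp add: T_def)

lemma rho_gen_T:
  "rho_gen A = (T 1 0 0, T 1 0 0, T 1 1 0)"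
  "rho_gen B = (T 0 0 1, T 1 0 0, T 0 0 0)"
  "rho_gen C = (T 0 0 1, T 0 0 1, T 0 1 1)"
  by (simp_all add: rho_gen_def T_def)

lemma I_T: "I12 = T 0 (-1) 0" "I3 = T 0 0 0"
  by (simp_all add: I12_def I3_def T_def)

datatype tup = Tp nat nat nat nat nat nat

fun ins :: "tup \<Rightarrow> gen \<Rightarrow> tup" where
  "ins (Tp x11 x21 x22 x31 x32 x33) C = Tp x11 x21 x22 x31 x32 (Suc x33)"
| "ins (Tp x11 x21 x22 x31 x32 x33) B =
     (if x33 > 0 then Tp x11 x21 x22 x31 (Suc x32) (x33 - 1)
      else Tp x11 x21 (Suc x22) x31 x32 0)"
| "ins (Tp x11 x21 x22 x31 x32 x33) A =
     (if x33 > 0 then Tp x11 x21 x22 (Suc x31) x32 (x33 - 1)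
      else if x32 > 0 then Tp x11 x21 (Suc x22) (Suc x31) (x32 - 1) 0
      else if x22 > 0 then Tp x11 (Suc x21) (x22 - 1) x31 0 0
      else Tp (Suc x11) x21 0 x31 0 0)"

fun F :: "tup \<Rightarrow> mat3" where
  "F (Tp x11 x21 x22 x31 x32 x33) =
    (T (real (x11+x21+x31)) (real (x21+x22+x32+x31+x32+x33+x11) - 1) (real (x21+x22+x32+x31+x32+x33)),
     T (real (x11+x21+x31+x21+x22+x32)) (real (x11+2*x21+x22+x31+x32+x33) - 1) (real (x31+x32+x33)),
     T (real (x11+x21+x31)) (real (x11+x21+x31+x32+x33)) (real (x31+x32+x33)))"

lemma F_ins: "F (ins t g) = mmul3 (F t) (rho_gen g)"
  by (cases t; cases g) (auto simp: rho_gen_T max_def)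

definition nf :: "gen list \<Rightarrow> tup" where
  "nf u = foldl ins (Tp 0 0 0 0 0 0) u"

lemma rho_snoc: "rho (u @ [g]) = mmul3 (rho u) (rho_gen g)"
proof (cases u)
  case Nil
  then show ?thesis by (cases g) (simp_all add: rho_gen_T I_T)
next
  case (Cons x xs)
  then show ?thesis by simp
qed

lemma rho_F: "rho u = F (nf u)"
proof (induction u rule: rev_induct)
  case Nil
  then show ?case by (simp add: nf_def I_T)
next
  case (snoc g u)
  then show ?case by (simp add: rho_snoc nf_def F_ins)
qed

lemma F_id: "mmul3 (F t) (I12, I12, I3) = F t"
  by (cases t) (auto simp: I_T max_def)

lemma F_assoc: "mmul3 (mmul3 (F t) (F s)) (rho_gen g) = mmul3 (F t) (mmul3 (F s) (rho_gen g))"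
  by (cases t; cases s; cases g) (auto simp: rho_gen_T max_def)

lemma part1: "rho (u @ v) = mmul3 (rho u) (rho v)"
proof (induction v rule: rev_induct)
  case Nil
  then show ?case by (metis F_id rho.simps(1) rho_F append_Nil2)
next
  case (snoc g v)
  have "rho (u @ v @ [g]) = mmul3 (rho (u @ v)) (rho_gen g)"
    using rho_snoc[of "u @ v" g] by simp
  also have "\<dots> = mmul3 (mmul3 (rho u) (rho v)) (rho_gen g)" using snoc by simp
  also have "\<dots> = mmul3 (rho u) (mmul3 (rho v) (rho_gen g))" by (simp add: rho_F F_assoc)
  also have "\<dots> = mmul3 (rho u) (rho (v @ [g]))" by (simp add: rho_snoc)
  finally show ?case by simp
qed

lemma rel1: "idx i \<le> idx j \<Longrightarrow> idx j \<le> idx k \<Longrightarrow> rho [j,k,i] = rho [k,j,i]"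
  by (cases i; cases j; cases k) (auto simp: rho_gen_T max_def)

lemma rel2: "idx i \<le> idx j \<Longrightarrow> idx j \<le> idx k \<Longrightarrow> rho [k,j,i] = rho [k,i,j]"
  by (cases i; cases j; cases k) (auto simp: rho_gen_T max_def)

lemma step_rho: "ch3_step u v \<Longrightarrow> rho u = rho v"
proof (induction rule: ch3_step.induct)
  case (s1 i j k u v)
  then have "rho [j,k,i] = rho [k,j,i]" by (rule rel1)
  then show ?case by (simp only: part1)
next
  case (s2 i j k u v)
  then have "rho [k,j,i] = rho [k,i,j]" by (rule rel2)
  then show ?case by (simp only: part1)
qed

lemma part2: "ch3_eq u v \<Longrightarrow> rho u = rho v"
  unfolding ch3_eq_def
  by (induction rule: equivclp_induct) (auto dest: step_rho)

lemma eq_refl [simp]: "ch3_eq u u"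
  by (simp add: ch3_eq_def)

lemma eq_sym: "ch3_eq u v \<Longrightarrow> ch3_eq v u"
  unfolding ch3_eq_def by (rule equivclp_sym)

lemma eq_trans [trans]: "ch3_eq u v \<Longrightarrow> ch3_eq v w \<Longrightarrow> ch3_eq u w"
  unfolding ch3_eq_def by (rule equivclp_trans)

lemma step_ctx: "ch3_step u v \<Longrightarrow> ch3_step (x @ u @ y) (x @ v @ y)"
proof (induction rule: ch3_step.induct)
  case (s1 i j k u v)
  then show ?case using ch3_step.s1[of i j k "x @ u" "v @ y"] by simp
next
  case (s2 i j k u v)
  then show ?case using ch3_step.s2[of i j k "x @ u" "v @ y"] by simp
qed

lemma ctx: "ch3_eq u v \<Longrightarrow> ch3_eq (x @ u @ y) (x @ v @ y)"
  unfolding ch3_eq_def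
proof (induction rule: equivclp_induct)
  case base
  then show ?case by simp
next
  case (step y' z)
  then show ?case using step_ctx equivclp_into_equivclp by metis
qed

lemma S1: "idx i \<le> idx j \<Longrightarrow> idx j \<le> idx k \<Longrightarrow> ch3_eq [j,k,i] [k,j,i]"
  unfolding ch3_eq_def using ch3_step.s1[of i j k "[]" "[]"] by auto

lemma S2: "idx i \<le> idx j \<Longrightarrow> idx j \<le> idx k \<Longrightarrow> ch3_eq [k,j,i] [k,i,j]"
  unfolding ch3_eq_def using ch3_step.s2[of i j k "[]" "[]"] by auto

lemma c1: "ch3_eq ([C,A] @ [B]) ([B] @ [C,A])"
proof -
  have "ch3_eq [B,C,A] [C,B,A]" using S1[of A B C] by simp
  also have "ch3_eq [C,B,A] [C,A,B]" using S2[of A B C] by simp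
  finally show ?thesis by (simp add: eq_sym)
qed

lemma c2: "ch3_eq ([C,B] @ [B]) ([B] @ [C,B])"
  using S1[of B B C] by (simp add: eq_sym)

lemma c3: "ch3_eq [C,B,A] [B,C,A]"
  using S1[of A B C] by (simp add: eq_sym)

lemma c4: "ch3_eq ([C,B] @ [C,A]) ([C,A] @ [C,B])"
proof -
  have h0: "ch3_eq [B,C,A] [C,A,B]" using c1 by (simp add: eq_sym)
  have h1: "ch3_eq [C,B,C,A] [C,C,A,B]" using ctx[OF h0, of "[C]" "[]"] by simp
  have h2: "ch3_eq [C,C,A] [C,A,C]" using S2[of A C C] by simp
  have h3: "ch3_eq [C,C,A,B] [C,A,C,B]" using ctx[OF h2, of "[]" "[B]"] by simp
  show ?thesis using eq_trans[OF h1 h3] by simp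
qed

lemma c5: "ch3_eq ([C,A] @ [A]) ([A] @ [C,A])"
  using S1[of A A C] by (simp add: eq_sym)

lemma c6: "ch3_eq ([B,A] @ [A]) ([A] @ [B,A])"
  using S1[of A A B] by (simp add: eq_sym)

lemma c7: "ch3_eq ([B] @ [B,A]) ([B,A] @ [B])"
  using S2[of A B B] by simp

lemma c8: "ch3_eq ([C] @ [C,B]) ([C,B] @ [C])"
  using S2[of B C C] by simp

lemma c9: "ch3_eq ([C] @ [C,A]) ([C,A] @ [C])"
  using S2[of A C C] by simp

definition pw :: "nat \<Rightarrow> gen list \<Rightarrow> gen list" where
  "pw n w = concat (replicate n w)"

lemma pw_0 [simp]: "pw 0 w = []"
  by (simp add: pw_def)

lemma pw_Suc_cons: "pw (Suc n) w = w @ pw n w"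
  by (simp add: pw_def)

lemma pw_Suc_snoc: "pw (Suc n) w = pw n w @ w"
  by (simp add: pw_def replicate_append_same[symmetric] del: replicate_append_same)

lemma ctxL: "ch3_eq u v \<Longrightarrow> ch3_eq (x @ u) (x @ v)"
  using ctx[of u v x "[]"] by simp

lemma ctxR: "ch3_eq u v \<Longrightarrow> ch3_eq (u @ y) (v @ y)"
  using ctx[of u v "[]" y] by simp

lemma comm_pw: "ch3_eq (w @ z) (z @ w) \<Longrightarrow> ch3_eq (pw n w @ z) (z @ pw n w)"
proof (induction n)
  case 0
  then show ?case by simp
next
  case (Suc n)
  have "ch3_eq (w @ pw n w @ z) (w @ z @ pw n w)" using ctxL[OF Suc.IH[OF Suc.prems]] .
  also have "ch3_eq (w @ z @ pw n w) (z @ w @ pw n w)" using ctxR[OF Suc.prems, of "pw n w"] by simp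
  finally show ?case by (simp add: pw_Suc_cons)
qed

fun st :: "tup \<Rightarrow> gen list" where
  "st (Tp x11 x21 x22 x31 x32 x33) =
     pw x11 [A] @ pw x21 [B,A] @ pw x22 [B] @ pw x31 [C,A] @ pw x32 [C,B] @ pw x33 [C]"

lemma F_inj: "F t = F s \<Longrightarrow> t = s"
  by (cases t; cases s) auto

lemma ins_ok: "ch3_eq (st t @ [g]) (st (ins t g))"
proof (cases t)
  case (Tp x11 x21 x22 x31 x32 x33)
  define P1 where "P1 = pw x11 [A]"
  define P2 where "P2 = pw x21 [B,A]"
  define P3 where "P3 = pw x22 [B]"
  define P4 where "P4 = pw x31 [C,A]"
  define P5 where "P5 = pw x32 [C,B]"
  show ?thesis
  proof (cases g)
    case C
    then show ?thesis using Tp by (simp add: pw_Suc_snoc)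
  next
    case B
    show ?thesis
    proof (cases x33)
      case (Suc m)
      have h: "ch3_eq (pw m [C] @ [C,B]) ([C,B] @ pw m [C])" using comm_pw[OF c8, of m] .
      show ?thesis using ctxL[OF h, of "P1 @ P2 @ P3 @ P4 @ P5"] Tp B Suc
        by (simp add: pw_Suc_snoc P1_def P2_def P3_def P4_def P5_def)
    next
      case 0
      have h1: "ch3_eq (P4 @ P5 @ [B]) (P4 @ [B] @ P5)"
        using ctxL[OF comm_pw[OF c2, of x32], of P4] by (simp add: P5_def)
      have h2: "ch3_eq (P4 @ [B] @ P5) ([B] @ P4 @ P5)"
        using ctxR[OF comm_pw[OF c1, of x31], of P5] by (simp add: P4_def)
      show ?thesis using ctxL[OF eq_trans[OF h1 h2], of "P1 @ P2 @ P3"] Tp B 0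
        by (simp add: pw_Suc_snoc P1_def P2_def P3_def P4_def P5_def)
    qed
  next
    case A
    show ?thesis
    proof (cases x33)
      case (Suc m)
      have h1: "ch3_eq (P5 @ pw m [C] @ [C,A]) (P5 @ [C,A] @ pw m [C])"
        using ctxL[OF comm_pw[OF c9, of m], of P5] by simp
      have h2: "ch3_eq (P5 @ [C,A] @ pw m [C]) ([C,A] @ P5 @ pw m [C])"
        using ctxR[OF comm_pw[OF c4, of x32], of "pw m [C]"] by (simp add: P5_def)
      show ?thesis using ctxL[OF eq_trans[OF h1 h2], of "P1 @ P2 @ P3 @ P4"] Tp A Suc
        by (simp add: pw_Suc_snoc P1_def P2_def P3_def P4_def P5_def)
    next
      case 0
      note z33 = 0
      show ?thesis
      proof (cases x32)
        case (Suc m)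
        have e1: "ch3_eq (P4 @ pw m [C,B] @ [C,B,A]) (P4 @ pw m [C,B] @ [B,C,A])"
          using ctxL[OF c3, of "P4 @ pw m [C,B]"] by simp
        have e2: "ch3_eq (P4 @ pw m [C,B] @ [B,C,A]) (P4 @ [B] @ pw m [C,B] @ [C,A])"
          using ctx[OF comm_pw[OF c2, of m], of P4 "[C,A]"] by simp
        have e3: "ch3_eq (P4 @ [B] @ pw m [C,B] @ [C,A]) ([B] @ P4 @ pw m [C,B] @ [C,A])"
          using ctxR[OF comm_pw[OF c1, of x31], of "pw m [C,B] @ [C,A]"] by (simp add: P4_def)
        have e4: "ch3_eq ([B] @ P4 @ pw m [C,B] @ [C,A]) ([B] @ P4 @ [C,A] @ pw m [C,B])"
          using ctx[OF comm_pw[OF c4, of m], of "[B] @ P4" "[]"] by simp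
        have e: "ch3_eq (P4 @ pw m [C,B] @ [C,B,A]) ([B] @ P4 @ [C,A] @ pw m [C,B])"
          using eq_trans[OF e1 eq_trans[OF e2 eq_trans[OF e3 e4]]] .
        show ?thesis using ctxL[OF e, of "P1 @ P2 @ P3"] Tp A Suc 0
          by (simp add: pw_Suc_snoc P1_def P2_def P3_def P4_def P5_def)
      next
        case 0
        note z32 = 0
        have f1: "ch3_eq (P4 @ [A]) ([A] @ P4)"
          using comm_pw[OF c5, of x31] by (simp add: P4_def)
        show ?thesis
        proof (cases x22)
          case (Suc m)
          have g1: "ch3_eq (P1 @ P2 @ pw m [B] @ [B] @ P4 @ [A]) (P1 @ P2 @ pw m [B] @ [B] @ [A] @ P4)"
            using ctxL[OF f1, of "P1 @ P2 @ pw m [B] @ [B]"] by simp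
          have g2: "ch3_eq (P1 @ P2 @ pw m [B] @ [B] @ [A] @ P4) (P1 @ P2 @ [B,A] @ pw m [B] @ P4)"
            using ctx[OF comm_pw[OF c7, of m], of "P1 @ P2" P4] by simp
          show ?thesis using eq_trans[OF g1 g2] Tp A Suc z33 z32
            by (simp add: pw_Suc_snoc P1_def P2_def P3_def P4_def P5_def)
        next
          case 0
          have g1: "ch3_eq (P1 @ P2 @ P4 @ [A]) (P1 @ P2 @ [A] @ P4)"
            using ctxL[OF f1, of "P1 @ P2"] by simp
          have g2: "ch3_eq (P1 @ P2 @ [A] @ P4) (P1 @ [A] @ P2 @ P4)"
            using ctx[OF comm_pw[OF c6, of x21], of P1 P4] by (simp add: P2_def)
          show ?thesis using eq_trans[OF g1 g2] Tp A z33 z32 0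
            by (simp add: pw_Suc_snoc P1_def P2_def P3_def P4_def P5_def)
        qed
      qed
    qed
  qed
qed

lemma nf_ok: "ch3_eq u (st (nf u))"
proof (induction u rule: rev_induct)
  case Nil
  then show ?case by (simp add: nf_def)
next
  case (snoc g u)
  have "ch3_eq (u @ [g]) (st (nf u) @ [g])" using ctxR[OF snoc.IH] .
  also have "ch3_eq (st (nf u) @ [g]) (st (ins (nf u) g))" by (rule ins_ok)
  finally show ?case by (simp add: nf_def)
qed

theorem lemmaA1:
  shows "(\<forall>u v. rho (u @ v) = mmul3 (rho u) (rho v))
       \<and> (\<forall>u v. ch3_eq u v \<longrightarrow> rho u = rho v)
       \<and> (\<forall>u v. rho u = rho v \<longrightarrow> ch3_eq u v)"
proof (intro conjI allI impI)
  fix u v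
  show "rho (u @ v) = mmul3 (rho u) (rho v)" by (rule part1)
next
  fix u v
  assume "ch3_eq u v"
  then show "rho u = rho v" by (rule part2)
next
  fix u v
  assume "rho u = rho v"
  then have "nf u = nf v" by (simp add: rho_F F_inj)
  then show "ch3_eq u v" using nf_ok[of u] nf_ok[of v] eq_sym eq_trans by metis
qed

end
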